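(* Let $(P,\trianglerighteq)$ be a transitive relation and let $(P,\succ)$ be a poset minimally induced by $(P,\trianglerighteq)$. Then the width of $(P,\succ)$ equals the width of $(P,\trianglerighteq)$.
   Context: A transitive relation is a pair $(P,\trianglerighteq)$ with $\trianglerighteq\subseteq P\times P$ transitive (not necessarily irreflexive). Two elements $x,y$ are incomparable with respect to a relation $R$ if neither $(x,y)\in R$ nor $(y,x)\in R$; the width of a transitive relation (or poset) is the maximum size of a set of mutually incomparable elements. A poset is a pair $(P,\succ)$ with $\succ$ irreflexive and transitive. A poset $(P,\succ)$ is induced by $(P,\trianglerighteq)$ if $\succ\subseteq\trianglerighteq$; it is minimally induced if, for every pair $(x,y)\in\trianglerighteq\setminus\succ$, the relation $\succ\cup\{(x,y)\}$ does not generate a valid partial order, i.e. the directed graph on $P$ with edge set $\succ\cup\{(x,y)\}$ contains a directed cycle. *)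

theory Defs
  imports Main "HOL-Library.Extended_Nat"
begin

definition transitive_rel :: "'a set \<Rightarrow> ('a \<times> 'a) set \<Rightarrow> bool" where
  "transitive_rel P R \<longleftrightarrow> R \<subseteq> P \<times> P \<and> trans R"

definition poset_rel :: "'a set \<Rightarrow> ('a \<times> 'a) set \<Rightarrow> bool" where
  "poset_rel P S \<longleftrightarrow> S \<subseteq> P \<times> P \<and> irrefl S \<and> trans S"

definition incomparable :: "('a \<times> 'a) set \<Rightarrow> 'a \<Rightarrow> 'a \<Rightarrow> bool" where
  "incomparable R x y \<longleftrightarrow> (x, y) \<notin> R \<and> (y, x) \<notin> R"

definition antichain_rel :: "'a set \<Rightarrow> ('a \<times> 'a) set \<Rightarrow> 'a set \<Rightarrow> bool" where
  "antichain_rel P R A \<longleftrightarrow> A \<subseteq> P \<and> (\<forall>x\<in>A. \<forall>y\<in>A. x \<noteq> y \<longrightarrow> incomparable R x y)"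

definition width :: "'a set \<Rightarrow> ('a \<times> 'a) set \<Rightarrow> enat" where
  "width P R = Sup {enat (card A) | A. finite A \<and> antichain_rel P R A}"

definition minimally_induced :: "'a set \<Rightarrow> ('a \<times> 'a) set \<Rightarrow> ('a \<times> 'a) set \<Rightarrow> bool" where
  "minimally_induced P R S \<longleftrightarrow> poset_rel P S \<and> S \<subseteq> R \<and>
     (\<forall>(x, y) \<in> R - S. \<not> acyclic (S \<union> {(x, y)}))"

end

theory Submission
  imports Defs
begin

lemma key:
  assumes "poset_rel P S" "(x, y) \<in> R" "(x, y) \<notin> S" "\<not> acyclic (S \<union> {(x, y)})"
  shows "x = y \<or> (y, x) \<in> S"
proof -
  have tr: "trans S" and ir: "irrefl S" using assms(1) by (auto simp: poset_rel_def)
  from assms(4) obtain z where "(z, z) \<in> (insert (x, y) S)\<^sup>+" by (auto simp: acyclic_def)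
  hence "(z, z) \<in> S\<^sup>+ \<or> ((z, x) \<in> S\<^sup>* \<and> (y, z) \<in> S\<^sup>*)" by (simp add: trancl_insert)
  moreover have e1: "S\<^sup>+ = S" using tr by (rule trancl_id)
  moreover have "S\<^sup>* = S\<^sup>=" using e1 by (simp add: rtrancl_trancl_reflcl del: reflcl_trancl)
  ultimately have "(z, z) \<in> S \<or> (y, x) \<in> S\<^sup>=" using tr by (metis rtrancl_trans)
  thus ?thesis using ir unfolding irrefl_def by auto
qed

theorem lemma4:
  fixes P :: "'a set" and R S :: "('a \<times> 'a) set"
  assumes "transitive_rel P R"
    and "poset_rel P S"
    and "minimally_induced P R S"
  shows "width P S = width P R"
proof -
  have sub: "S \<subseteq> R" and cyc: "\<forall>(x, y) \<in> R - S. \<not> acyclic (S \<union> {(x, y)})"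
    using assms(3) by (auto simp: minimally_induced_def)
  have inc: "incomparable S x y = incomparable R x y" if "x \<noteq> y" for x y
  proof
    assume h: "incomparable S x y"
    show "incomparable R x y"
    proof (rule ccontr)
      assume "\<not> incomparable R x y"
      then consider "(x, y) \<in> R" | "(y, x) \<in> R" by (auto simp: incomparable_def)
      thus False
      proof cases
        case 1
        have "(x, y) \<notin> S" using h by (auto simp: incomparable_def)
        with 1 cyc have "\<not> acyclic (S \<union> {(x, y)})" by auto
        from key[OF assms(2) 1 \<open>(x, y) \<notin> S\<close> this] that h show False
          by (auto simp: incomparable_def)
      next
        case 2
        have "(y, x) \<notin> S" using h by (auto simp: incomparable_def)
        with 2 cyc have "\<not> acyclic (S \<union> {(y, x)})" by auto
        from key[OF assms(2) 2 \<open>(y, x) \<notin> S\<close> this] that h show False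
          by (auto simp: incomparable_def)
      qed
    qed
  next
    assume "incomparable R x y" thus "incomparable S x y" using sub by (auto simp: incomparable_def)
  qed
  have "antichain_rel P S A = antichain_rel P R A" for A
    unfolding antichain_rel_def using inc by blast
  thus ?thesis unfolding width_def by simp
qed

end
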